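(* Given a set cover instance with ground set $E$ ($|E|=n$) and sets $X_1,\dots,X_m$ with $\bigcup_i X_i=E$, let $I$ be the 2-D Euclidean g2g-anycast instance constructed from it as described in the context. If an optimal solution of $I$ has cost $C$, then the set cover instance has a cover using at most $C/2$ sets.
   Context: In 2-D Euclidean g2g-anycast ($\kappa=2$), the nodes are points in $\mathbb{R}^2$, there is a source group $S$ and destination groups with demands $(S,T)$, and broadcast and funnel costs are both $\|u-v\|^2$. A solution assigns to each $s\in S$ a radius $\rho_s\ge0$, a set $A_s$ of nodes with $\|s-t\|^2\le\rho_s$ for $t\in A_s$, and a tree $H_s$ on nodes containing $\{s\}\cup A_s$. It is feasible if every destination group meets some $A_s$. Its cost is $\sum_s\rho_s+\sum_s\sum_{uv\in H_s}\|u-v\|^2$. Construction of $I$: - Choose points $x_1,\dots,x_m\in\mathbb{R}^2$ with pairwise distances at least $D$, where $(D-2)^2>2m$. - For each $i$, choose a point $y_i$ with $\|x_i-y_i\|=1$. - The source group is $S=\{x_1,\dots,x_m\}$. - For each element $e\in E$, the destination group $T_e$ consists of one terminal node $t(e)_i$ located at $y_i$ for each $i$ with $e\in X_i$. - The demands are $(S,T_e)$ for all $e\in E$. *)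

theory Defs
  imports "HOL-Analysis.Analysis"
begin

text \<open>Nodes of the constructed instance: the source node for set index i, and the
terminal node t(e)_i for element e and set index i.\<close>
datatype 'e node = Src nat | Term 'e nat

definition inst_nodes :: "nat \<Rightarrow> (nat \<Rightarrow> 'e set) \<Rightarrow> 'e node set" where
  "inst_nodes m X = Src ` {1..m} \<union> {Term e i | e i. i \<in> {1..m} \<and> e \<in> X i}"

definition dest_group :: "nat \<Rightarrow> (nat \<Rightarrow> 'e set) \<Rightarrow> 'e \<Rightarrow> 'e node set" where
  "dest_group m X e = {Term e i | i. i \<in> {1..m} \<and> e \<in> X i}"

fun loc :: "(nat \<Rightarrow> real^2) \<Rightarrow> (nat \<Rightarrow> real^2) \<Rightarrow> 'e node \<Rightarrow> real^2" where
  "loc x y (Src i) = x i"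
| "loc x y (Term e i) = y i"

definition is_tree :: "'a set \<Rightarrow> 'a set \<Rightarrow> 'a set set \<Rightarrow> bool" where
  "is_tree V W F \<longleftrightarrow> W \<subseteq> V \<and> finite W \<and>
     F \<subseteq> {{u, v} | u v. u \<in> W \<and> v \<in> W \<and> u \<noteq> v} \<and>
     (\<forall>u\<in>W. \<forall>v\<in>W. (u, v) \<in> {(a, b). {a, b} \<in> F}\<^sup>*) \<and>
     card F + 1 = card W"

definition edge_cost :: "(nat \<Rightarrow> real^2) \<Rightarrow> (nat \<Rightarrow> real^2) \<Rightarrow> 'e node set \<Rightarrow> real" where
  "edge_cost x y f = (THE c. \<exists>u v. f = {u, v} \<and> c = (norm (loc x y u - loc x y v))\<^sup>2)"

text \<open>Feasible solution: for each source x_i (i in 1..m) a radius rho i, a set A i of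
nodes within broadcast range, and a tree (W i, F i) containing x_i and A i.\<close>
definition g2g_feasible ::
  "nat \<Rightarrow> (nat \<Rightarrow> 'e set) \<Rightarrow> 'e set \<Rightarrow> (nat \<Rightarrow> real^2) \<Rightarrow> (nat \<Rightarrow> real^2) \<Rightarrow>
   (nat \<Rightarrow> real) \<Rightarrow> (nat \<Rightarrow> 'e node set) \<Rightarrow> (nat \<Rightarrow> 'e node set) \<Rightarrow> (nat \<Rightarrow> 'e node set set) \<Rightarrow> bool"
  where
  "g2g_feasible m X E x y rho A W F \<longleftrightarrow>
     (\<forall>i\<in>{1..m}.
        rho i \<ge> 0 \<and> A i \<subseteq> inst_nodes m X \<and>
        (\<forall>t\<in>A i. (norm (x i - loc x y t))\<^sup>2 \<le> rho i) \<and>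
        is_tree (inst_nodes m X) (W i) (F i) \<and> insert (Src i) (A i) \<subseteq> W i) \<and>
     (\<forall>e\<in>E. \<exists>i\<in>{1..m}. dest_group m X e \<inter> A i \<noteq> {})"

definition g2g_cost ::
  "nat \<Rightarrow> (nat \<Rightarrow> real^2) \<Rightarrow> (nat \<Rightarrow> real^2) \<Rightarrow> (nat \<Rightarrow> real) \<Rightarrow> (nat \<Rightarrow> 'e node set set) \<Rightarrow> real"
  where
  "g2g_cost m x y rho F = (\<Sum>i\<in>{1..m}. rho i) + (\<Sum>i\<in>{1..m}. \<Sum>f\<in>F i. edge_cost x y f)"

end

theory Submission
  imports Defs
begin

lemma edge_cost_eq: "edge_cost x y {u, v} = (norm (loc x y u - loc x y v))\<^sup>2"
  unfolding edge_cost_def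
proof (rule the_equality)
  show "\<exists>u' v'. {u, v} = {u', v'} \<and> (norm (loc x y u - loc x y v))\<^sup>2 = (norm (loc x y u' - loc x y v'))\<^sup>2"
    by blast
next
  fix c assume "\<exists>u' v'. {u, v} = {u', v'} \<and> c = (norm (loc x y u' - loc x y v'))\<^sup>2"
  then obtain u' v' where h: "{u, v} = {u', v'}" "c = (norm (loc x y u' - loc x y v'))\<^sup>2" by blast
  from h(1) have "(u = u' \<and> v = v') \<or> (u = v' \<and> v = u')" by (simp add: doubleton_eq_iff)
  then show "c = (norm (loc x y u - loc x y v))\<^sup>2" using h(2) by (auto simp: norm_minus_commute)
qed

lemma tree_finF:
  assumes "is_tree V W F" shows "finite F"
proof -
  have "F \<subseteq> Pow W" using assms unfolding is_tree_def by auto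
  moreover have "finite W" using assms unfolding is_tree_def by auto
  ultimately show ?thesis by (meson finite_Pow_iff finite_subset)
qed

lemma tree_cost_nonneg:
  assumes "is_tree V W F" shows "(\<Sum>f\<in>F. edge_cost x y f) \<ge> 0"
proof (rule sum_nonneg)
  fix f assume "f \<in> F"
  then obtain u v where "f = {u, v}" using assms unfolding is_tree_def by blast
  then show "edge_cost x y f \<ge> 0" by (simp add: edge_cost_eq)
qed

theorem mainTheorem11:
  fixes E :: "'e set" and X :: "nat \<Rightarrow> 'e set" and m :: nat
    and D :: real and x y :: "nat \<Rightarrow> real^2" and C :: real
  assumes finE: "finite E"
    and cover: "(\<Union>i\<in>{1..m}. X i) = E"
    and Dpos: "0 < D"
    and Dbig: "(D - 2)\<^sup>2 > 2 * real m"
    and xsep: "\<forall>i\<in>{1..m}. \<forall>j\<in>{1..m}. i \<noteq> j \<longrightarrow> dist (x i) (x j) \<ge> D"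
    and ydist: "\<forall>i\<in>{1..m}. dist (x i) (y i) = 1"
    and opt_ex: "\<exists>rho A W F. g2g_feasible m X E x y rho A W F \<and> g2g_cost m x y rho F = C"
    and opt_min: "\<forall>rho A W F. g2g_feasible m X E x y rho A W F \<longrightarrow> C \<le> g2g_cost m x y rho F"
  shows "\<exists>J \<subseteq> {1..m}. (\<Union>i\<in>J. X i) = E \<and> real (card J) \<le> C / 2"
proof -
  obtain rho A W F where feas: "g2g_feasible m X E x y rho A W F" and cost: "g2g_cost m x y rho F = C"
    using opt_ex by blast
  define T where "T i = (\<Sum>f\<in>F i. edge_cost x y f)" for i
  have tree: "is_tree (inst_nodes m X) (W i) (F i)" if "i \<in> {1..m}" for i
    using feas that unfolding g2g_feasible_def by blast
  have Tnn: "T i \<ge> 0" if "i \<in> {1..m}" for i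
    using tree_cost_nonneg[OF tree[OF that]] unfolding T_def by blast
  have rnn: "rho i \<ge> 0" if "i \<in> {1..m}" for i
    using feas that unfolding g2g_feasible_def by blast
  have Ceq: "C = (\<Sum>i\<in>{1..m}. rho i) + (\<Sum>i\<in>{1..m}. T i)"
    using cost unfolding g2g_cost_def T_def by simp
  have D4: "D > 4" if "m \<ge> 2"
  proof (rule ccontr)
    assume "\<not> D > 4"
    then have "D * (D - 4) \<le> 0" using Dpos by (simp add: mult_nonneg_nonpos)
    then have "(D - 2)\<^sup>2 \<le> 4" by (simp add: power2_eq_square algebra_simps)
    with Dbig that show False by simp
  qed
  have far: "norm (x i - y j) \<ge> D - 1" if "i \<in> {1..m}" "j \<in> {1..m}" "i \<noteq> j" for i j
  proof -
    have "dist (x i) (x j) \<ge> D" using xsep that by blast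
    moreover have "dist (x i) (x j) \<le> dist (x i) (y j) + dist (y j) (x j)" by (rule dist_triangle)
    moreover have "dist (y j) (x j) = 1" using ydist that by (simp add: dist_commute)
    ultimately show ?thesis by (simp add: dist_norm)
  qed
  have m2: "m \<ge> 2" if "i \<in> {1..m}" "j \<in> {1..m}" "i \<noteq> j" for i j :: nat
    using that by auto
  show ?thesis
  proof (cases "C \<ge> 2 * real m")
    case True
    then show ?thesis using cover by (intro exI[of _ "{1..m}"]) auto
  next
    case False
    have rleC: "rho i \<le> C" if "i \<in> {1..m}" for i
    proof -
      have "rho i \<le> (\<Sum>i\<in>{1..m}. rho i)"
        by (rule member_le_sum) (use that rnn in auto)
      moreover have "(\<Sum>i\<in>{1..m}. T i) \<ge> 0" by (rule sum_nonneg) (use Tnn in auto)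
      ultimately show ?thesis using Ceq by linarith
    qed
    have same: "j = i" if "i \<in> {1..m}" "j \<in> {1..m}" "Term e j \<in> A i" for i j e
    proof (rule ccontr)
      assume ne: "j \<noteq> i"
      have "m \<ge> 2" using m2[OF that(1,2)] ne by auto
      then have D: "D > 4" by (rule D4)
      have "(norm (x i - loc x y (Term e j)))\<^sup>2 \<le> rho i"
        using feas that unfolding g2g_feasible_def by blast
      then have a: "(norm (x i - y j))\<^sup>2 < (D - 2)\<^sup>2" using rleC[OF that(1)] False Dbig by simp
      have "(D - 1)\<^sup>2 \<le> (norm (x i - y j))\<^sup>2"
        using far[OF that(1,2)] ne D by (intro power_mono) auto
      with a D show False by (simp add: power2_eq_square algebra_simps)
    qed
    define J where "J = {i\<in>{1..m}. \<exists>e. Term e i \<in> A i}"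
    have Jsub: "J \<subseteq> {1..m}" unfolding J_def by auto
    have Jcov: "(\<Union>i\<in>J. X i) = E"
    proof
      show "(\<Union>i\<in>J. X i) \<subseteq> E" using cover Jsub by auto
    next
      show "E \<subseteq> (\<Union>i\<in>J. X i)"
      proof
        fix e assume "e \<in> E"
        then obtain i where i: "i \<in> {1..m}" "dest_group m X e \<inter> A i \<noteq> {}"
          using feas unfolding g2g_feasible_def by blast
        then obtain j where j: "j \<in> {1..m}" "e \<in> X j" "Term e j \<in> A i"
          unfolding dest_group_def by blast
        have "j = i" using same[OF i(1) j(1) j(3)] .
        then show "e \<in> (\<Union>i\<in>J. X i)" using i j unfolding J_def by blast
      qed
    qed
    have rJ: "rho i \<ge> 1" if iJ: "i \<in> J" for i
    proof -
      obtain e where e: "Term e i \<in> A i" "i \<in> {1..m}" using iJ unfolding J_def by blast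
      have "(norm (x i - loc x y (Term e i)))\<^sup>2 \<le> rho i"
        using feas e unfolding g2g_feasible_def by blast
      moreover have "norm (x i - y i) = 1" using ydist e(2) by (simp add: dist_norm)
      ultimately show ?thesis by simp
    qed
    have TJ: "T i \<ge> 1" if iJ: "i \<in> J" for i
    proof -
      obtain e where e: "Term e i \<in> A i" "i \<in> {1..m}" using iJ unfolding J_def by blast
      have tr: "is_tree (inst_nodes m X) (W i) (F i)" using tree[OF e(2)] .
      have sub: "insert (Src i) (A i) \<subseteq> W i" using feas e(2) unfolding g2g_feasible_def by blast
      have "(Src i, Term e i) \<in> {(a, b). {a, b} \<in> F i}\<^sup>*"
        using tr sub e(1) unfolding is_tree_def by blast
      then obtain b where b: "{Src i, b} \<in> F i"
        by (cases rule: converse_rtranclE) auto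
      then obtain u v where uv: "{Src i, b} = {u, v}" "u \<in> W i" "v \<in> W i" "u \<noteq> v"
        using tr unfolding is_tree_def by blast
      have bne: "b \<noteq> Src i" using uv(1,4) by (auto simp: doubleton_eq_iff)
      have "b \<in> W i" using uv by (auto simp: doubleton_eq_iff)
      then have bin: "b \<in> inst_nodes m X" using tr unfolding is_tree_def by blast
      have ec: "edge_cost x y {Src i, b} \<ge> 1"
      proof (cases b)
        case (Src j)
        then have j: "j \<in> {1..m}" "j \<noteq> i" using bin bne unfolding inst_nodes_def by auto
        have D: "D > 4" using D4 m2[OF e(2) j(1)] j(2) by auto
        have "dist (x i) (x j) \<ge> D" using xsep e(2) j by metis
        then have "norm (x i - x j) \<ge> 1" using D by (simp add: dist_norm)
        then have "1 \<le> (norm (x i - x j))\<^sup>2" by (simp add: one_le_power)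
        then show ?thesis using Src by (simp add: edge_cost_eq)
      next
        case (Term e' j)
        then have j: "j \<in> {1..m}" using bin unfolding inst_nodes_def by auto
        show ?thesis
        proof (cases "j = i")
          case True
          have "norm (x i - y i) = 1" using ydist e(2) by (simp add: dist_norm)
          then show ?thesis using Term True by (simp add: edge_cost_eq)
        next
          case False
          have D: "D > 4" using D4 m2[OF e(2) j] False by auto
          have "norm (x i - y j) \<ge> 1" using far[OF e(2) j] False D by auto
          then have "1 \<le> (norm (x i - y j))\<^sup>2" by (simp add: one_le_power)
          then show ?thesis using Term by (simp add: edge_cost_eq)
        qed
      qed
      have "edge_cost x y {Src i, b} \<le> T i"
        unfolding T_def
      proof (rule member_le_sum[OF b _ tree_finF[OF tr]])
        fix f assume "f \<in> F i - {{Src i, b}}"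
        then obtain u v where "f = {u, v}" using tr unfolding is_tree_def by blast
        then show "edge_cost x y f \<ge> 0" by (simp add: edge_cost_eq)
      qed
      with ec show ?thesis by linarith
    qed
    have "2 * real (card J) = (\<Sum>i\<in>J. 1 + 1)" by simp
    also have "\<dots> \<le> (\<Sum>i\<in>J. rho i + T i)" by (rule sum_mono) (use rJ TJ in fastforce)
    also have "\<dots> \<le> (\<Sum>i\<in>{1..m}. rho i + T i)"
      by (rule sum_mono2) (use Jsub rnn Tnn in fastforce)+
    also have "\<dots> = C" using Ceq by (simp add: sum.distrib)
    finally show ?thesis using Jsub Jcov by (intro exI[of _ J]) auto
  qed
qed

end
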